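(* Let $\alpha\in\mathbb{Q}(i)\setminus\mathbb{R}$ with $|\alpha|>1$, with minimal primitive polynomial $P_\alpha(X)=a_2X^2+a_1X+a_0$ ($a_0,a_1,a_2\in\mathbb{Z}$ coprime, $a_2>0$, $P_\alpha(\alpha)=0$), and $\mathcal{D}=\{0,\ldots,|a_0|-1\}$. Write $\alpha=\frac{num(\alpha)}{den(\alpha)}$ with $num(\alpha),den(\alpha)\in\mathbb{Z}[i]$ having no common Gaussian prime divisor. Let $x\in\mathbb{C}$, $k\in\mathbb{Z}$, and $(d_j)_{j\le k}$ a sequence in $\mathcal{D}$ with $d_k\ne0$ such that $x=\sum_{j\le k}d_j\alpha^j$ in $\mathbb{C}$. Then this series is an $\alpha$-expansion of $x$ if and only if it converges to $0$ in $K_p$ for every Gaussian prime $p$ dividing $den(\alpha)$.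
   Context: Let $\Lambda_\alpha=\mathbb{Z}[\alpha]\cap\alpha^{-1}\mathbb{Z}[\alpha^{-1}]$. An $\alpha$-expansion of $x$ is a representation $x=\sum_{j\le k}d_j\alpha^j$ with $d_j\in\mathcal{D}$, $d_k\ne0$, such that for every $l\le k$, $\sum_{j=l}^k d_j\alpha^{j-l}\in\Lambda_\alpha$. For a Gaussian prime $p$, $\nu_p:\mathbb{Q}(i)\to\mathbb{Z}\cup\{\infty\}$ is the exponent of $p$ in the (unique up to units and associates) factorization of a nonzero element into Gaussian primes, $\nu_p(0)=\infty$; the $p$-adic absolute value is $|x|_p=N(p)^{-\nu_p(x)}$ with $N(p)$ the norm of $p$, and $K_p$ is the completion of $\mathbb{Q}(i)$ with respect to $|\cdot|_p$. *)

theory Defs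
  imports Complex_Main
begin

definition gauss_int :: "complex \<Rightarrow> bool" where
  "gauss_int z \<longleftrightarrow> Re z \<in> \<int> \<and> Im z \<in> \<int>"

definition gauss_rat :: "complex \<Rightarrow> bool" where
  "gauss_rat z \<longleftrightarrow> Re z \<in> \<rat> \<and> Im z \<in> \<rat>"

definition gdvd :: "complex \<Rightarrow> complex \<Rightarrow> bool" where
  "gdvd a b \<longleftrightarrow> (\<exists>c. gauss_int c \<and> b = a * c)"

definition gauss_prime :: "complex \<Rightarrow> bool" where
  "gauss_prime p \<longleftrightarrow> gauss_int p \<and> p \<noteq> 0 \<and> \<not> gdvd p 1 \<and>
     (\<forall>a b. gauss_int a \<longrightarrow> gauss_int b \<longrightarrow> gdvd p (a * b) \<longrightarrow> gdvd p a \<or> gdvd p b)"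

definition gauss_val :: "complex \<Rightarrow> complex \<Rightarrow> int" where
  "gauss_val p x = (THE n::int. \<exists>u v. gauss_int u \<and> gauss_int v \<and>
      \<not> gdvd p u \<and> \<not> gdvd p v \<and> x = p powi n * u / v)"

definition padic_abs :: "complex \<Rightarrow> complex \<Rightarrow> real" where
  "padic_abs p x = (if x = 0 then 0 else (cmod p)\<^sup>2 powr (- real_of_int (gauss_val p x)))"

definition Zring :: "complex \<Rightarrow> complex set" where
  "Zring a = {z. \<exists>(c::nat \<Rightarrow> int) n. z = (\<Sum>i<n. of_int (c i) * a ^ i)}"

definition Lambda :: "complex \<Rightarrow> complex set" where
  "Lambda a = Zring a \<inter> (\<lambda>z. inverse a * z) ` Zring (inverse a)"

definition alpha_expansion :: "complex \<Rightarrow> int set \<Rightarrow> (int \<Rightarrow> int) \<Rightarrow> int \<Rightarrow> complex \<Rightarrow> bool" where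
  "alpha_expansion a D d k x \<longleftrightarrow>
     (\<forall>j\<le>k. d j \<in> D) \<and> d k \<noteq> 0 \<and>
     (\<lambda>n::nat. of_int (d (k - int n)) * a powi (k - int n)) sums x \<and>
     (\<forall>l\<le>k. (\<Sum>j\<in>{l..k}. of_int (d j) * a powi (j - l)) \<in> Lambda a)"

end

theory Submission
  imports Defs
begin

lemma gauss_int_iff: "gauss_int z \<longleftrightarrow> (\<exists>a b::int. z = Complex (of_int a) (of_int b))"
  unfolding gauss_int_def by (metis Ints_cases Ints_of_int complex.sel(1) complex.sel(2) complex_surj)

lemma gauss_int_add[intro]: "gauss_int a \<Longrightarrow> gauss_int b \<Longrightarrow> gauss_int (a + b)"
  unfolding gauss_int_def by auto
lemma gauss_int_diff[intro]: "gauss_int a \<Longrightarrow> gauss_int b \<Longrightarrow> gauss_int (a - b)"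
  unfolding gauss_int_def by auto
lemma gauss_int_minus[intro]: "gauss_int a \<Longrightarrow> gauss_int (- a)"
  unfolding gauss_int_def by auto
lemma gauss_int_mult[intro]: "gauss_int a \<Longrightarrow> gauss_int b \<Longrightarrow> gauss_int (a * b)"
  unfolding gauss_int_def by auto
lemma gauss_int_cnj[intro]: "gauss_int a \<Longrightarrow> gauss_int (cnj a)"
  unfolding gauss_int_def by auto
lemma gauss_int_cnj_iff[simp]: "gauss_int (cnj a) \<longleftrightarrow> gauss_int a"
  unfolding gauss_int_def by auto
lemma gauss_int_of_int[simp,intro]: "gauss_int (of_int n)"
  unfolding gauss_int_def by auto
lemma gauss_int_0[simp,intro]: "gauss_int 0" and gauss_int_1[simp,intro]: "gauss_int 1"
  unfolding gauss_int_def by auto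
lemma gauss_int_power[intro]: "gauss_int a \<Longrightarrow> gauss_int (a ^ n)"
  by (induction n) auto
lemma gauss_int_sum[intro]: "(\<And>i. i \<in> A \<Longrightarrow> gauss_int (f i)) \<Longrightarrow> gauss_int (sum f A)"
  by (induction A rule: infinite_finite_induct) auto

definition gn :: "complex \<Rightarrow> real" where "gn z = (Re z)\<^sup>2 + (Im z)\<^sup>2"

lemma gn_cmod: "gn z = (cmod z)\<^sup>2"
  unfolding gn_def cmod_def by simp
lemma gn_mult: "gn (a * b) = gn a * gn b"
  unfolding gn_cmod by (simp add: norm_mult power_mult_distrib)
lemma gn_eq_0[simp]: "gn z = 0 \<longleftrightarrow> z = 0"
  unfolding gn_cmod by simp
lemma gn_nonneg: "gn z \<ge> 0" unfolding gn_def by simp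
lemma gn_nat: "gauss_int z \<Longrightarrow> \<exists>n::nat. gn z = of_nat n"
proof -
  assume "gauss_int z"
  then obtain a b :: int where z: "z = Complex a b" using gauss_int_iff by blast
  have "gn z = of_int (a^2 + b^2)" unfolding z gn_def by simp
  moreover have "a^2 + b^2 \<ge> 0" by simp
  ultimately show ?thesis by (metis of_int_of_nat_eq zero_le_imp_eq_int)
qed
lemma gn_ge1: "gauss_int z \<Longrightarrow> z \<noteq> 0 \<Longrightarrow> gn z \<ge> 1"
proof -
  assume "gauss_int z" "z \<noteq> 0"
  then obtain n::nat where "gn z = n" using gn_nat by blast
  moreover have "n \<noteq> 0" using \<open>z \<noteq> 0\<close> \<open>gn z = n\<close> gn_eq_0 by fastforce
  ultimately show ?thesis by simp
qed
lemma mult_cnj_gn: "z * cnj z = complex_of_real (gn z)"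
  unfolding gn_def by (simp add: complex_mult_cnj)

lemma gdvd_refl[simp,intro]: "gdvd a a" unfolding gdvd_def by (rule exI[of _ 1]) auto
lemma gdvd_0[simp,intro]: "gdvd a 0" unfolding gdvd_def by (rule exI[of _ 0]) auto
lemma gdvd_trans: "gdvd a b \<Longrightarrow> gdvd b c \<Longrightarrow> gdvd a c"
  unfolding gdvd_def by (metis gauss_int_mult mult.assoc)
lemma gdvd_mult_right: "gdvd a b \<Longrightarrow> gauss_int c \<Longrightarrow> gdvd a (b * c)"
  unfolding gdvd_def by (metis gauss_int_mult mult.assoc)
lemma gdvd_mult_left: "gdvd a b \<Longrightarrow> gauss_int c \<Longrightarrow> gdvd a (c * b)"
  using gdvd_mult_right by (simp add: mult.commute)
lemma gdvd_triv: "gauss_int c \<Longrightarrow> gdvd a (a * c)"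
  unfolding gdvd_def by auto
lemma gdvd_add: "gdvd a b \<Longrightarrow> gdvd a c \<Longrightarrow> gdvd a (b + c)"
  unfolding gdvd_def by (metis distrib_left gauss_int_add)
lemma gdvd_diff: "gdvd a b \<Longrightarrow> gdvd a c \<Longrightarrow> gdvd a (b - c)"
  unfolding gdvd_def by (metis right_diff_distrib gauss_int_diff)
lemma gdvd_cnj: "gdvd a b \<Longrightarrow> gdvd (cnj a) (cnj b)"
  unfolding gdvd_def by (metis complex_cnj_mult gauss_int_cnj)
lemma gdvd_cnj_iff: "gdvd (cnj a) (cnj b) \<longleftrightarrow> gdvd a b"
  by (metis complex_cnj_cnj gdvd_cnj)

lemma unit_gn: "gauss_int p \<Longrightarrow> gdvd p 1 \<longleftrightarrow> gn p = 1"
proof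
  assume g: "gauss_int p" and "gdvd p 1"
  then obtain c where c: "gauss_int c" "1 = p * c" unfolding gdvd_def by auto
  then have "gn p * gn c = 1" by (metis gn_mult gn_def one_complex.simps power2_eq_square mult_1 add_0_right zero_complex.simps(2) one_complex.sel(1) power_one mult_zero_left)
  moreover obtain m n :: nat where "gn p = m" "gn c = n" using g c gn_nat by metis
  ultimately have "m * n = 1" by (metis of_nat_1 of_nat_eq_iff of_nat_mult)
  then show "gn p = 1" using \<open>gn p = m\<close> by simp
next
  assume g: "gauss_int p" and "gn p = 1"
  then have "p * cnj p = 1" by (simp add: mult_cnj_gn)
  then show "gdvd p 1" unfolding gdvd_def using g by (metis gauss_int_cnj)
qed

lemma gauss_div_rem:
  assumes a: "gauss_int a" and b: "gauss_int b" and b0: "b \<noteq> 0"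
  shows "\<exists>q r. gauss_int q \<and> gauss_int r \<and> a = q * b + r \<and> gn r < gn b"
proof -
  define x where "x = a / b"
  define q where "q = Complex (of_int (round (Re x))) (of_int (round (Im x)))"
  define r where "r = a - q * b"
  have gq: "gauss_int q" unfolding q_def gauss_int_def by simp
  have gr: "gauss_int r" unfolding r_def using a b gq by auto
  have "r = b * (x - q)" unfolding r_def x_def using b0 by (simp add: field_simps)
  then have "gn r = gn b * gn (x - q)" by (simp add: gn_mult)
  moreover have "gn (x - q) \<le> 1/2"
  proof -
    have h1: "\<bar>of_int (round (Re x)) - Re x\<bar> \<le> 1/2" by (rule of_int_round_abs_le)
    have h2: "\<bar>of_int (round (Im x)) - Im x\<bar> \<le> 1/2" by (rule of_int_round_abs_le)
    have "(Re x - of_int (round (Re x)))\<^sup>2 \<le> (1/2)\<^sup>2"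
      using h1 by (metis abs_minus_commute abs_le_square_iff abs_of_nonneg divide_nonneg_nonneg zero_le_one zero_le_numeral)
    moreover have "(Im x - of_int (round (Im x)))\<^sup>2 \<le> (1/2)\<^sup>2"
      using h2 by (metis abs_minus_commute abs_le_square_iff abs_of_nonneg divide_nonneg_nonneg zero_le_one zero_le_numeral)
    ultimately show ?thesis unfolding gn_def q_def by (simp add: power2_eq_square)
  qed
  moreover have "gn b > 0" using b0 gn_nonneg[of b] gn_eq_0[of b] by linarith
  ultimately have "gn r \<le> gn b * (1/2)" using mult_left_mono[of "gn (x - q)" "1/2" "gn b"] by simp
  then have "gn r < gn b" using \<open>gn b > 0\<close> by linarith
  moreover have "a = q * b + r" unfolding r_def by simp
  ultimately show ?thesis using gq gr by blast
qed

lemma gn_0[simp]: "gn 0 = 0" by (simp add: gn_def)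

lemma gdvd_gn_le: "gdvd d z \<Longrightarrow> z \<noteq> 0 \<Longrightarrow> gn d \<le> gn z"
proof -
  assume "gdvd d z" "z \<noteq> 0"
  then obtain c where c: "gauss_int c" "z = d * c" unfolding gdvd_def by auto
  then have "c \<noteq> 0" using \<open>z \<noteq> 0\<close> by auto
  then have "gn c \<ge> 1" using gn_ge1 c by auto
  then show ?thesis using c gn_mult[of d c] gn_nonneg[of d] by (simp add: mult_le_cancel_left1)
qed

lemma gauss_bezout:
  assumes a: "gauss_int a" and b: "gauss_int b" and nz: "a \<noteq> 0"
  shows "\<exists>g x y. gauss_int x \<and> gauss_int y \<and> g = a * x + b * y \<and> g \<noteq> 0 \<and> gdvd g a \<and> gdvd g b"
proof -
  define P where "P n \<longleftrightarrow> (\<exists>g x y. gauss_int x \<and> gauss_int y \<and> g = a * x + b * y \<and> g \<noteq> 0 \<and> gn g = of_nat n)" for n :: nat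
  obtain n0 where "gn a = of_nat n0" using gn_nat a by blast
  then have "P n0" unfolding P_def using nz by (intro exI[of _ a] exI[of _ 1] exI[of _ 0]) auto
  then obtain n where Pn: "P n" and min: "\<And>m. P m \<Longrightarrow> n \<le> m" using ex_has_least_nat[of P n0 id] by auto
  then obtain g x y where g: "gauss_int x" "gauss_int y" "g = a * x + b * y" "g \<noteq> 0" "gn g = of_nat n"
    unfolding P_def by auto
  have gg: "gauss_int g" using g a b by auto
  have key: "gdvd g c" if c: "gauss_int c" and cc: "\<exists>s t. gauss_int s \<and> gauss_int t \<and> c = a * s + b * t" for c
  proof -
    obtain s t where st: "gauss_int s" "gauss_int t" "c = a * s + b * t" using cc by auto
    obtain q r where qr: "gauss_int q" "gauss_int r" "c = q * g + r" "gn r < gn g"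
      using gauss_div_rem[OF c gg g(4)] by auto
    have "r = a * (s - q * x) + b * (t - q * y)" using qr(3) st(3) g(3) by (simp add: algebra_simps)
    moreover have "gauss_int (s - q * x)" "gauss_int (t - q * y)" using st qr g by auto
    ultimately have rr: "r = a * (s - q * x) + b * (t - q * y) \<and> gauss_int (s - q * x) \<and> gauss_int (t - q * y)" by blast
    have "r = 0"
    proof (rule ccontr)
      assume "r \<noteq> 0"
      moreover obtain m where "gn r = of_nat m" using gn_nat qr(2) by blast
      moreover note rr
      ultimately have "P m" unfolding P_def by blast
      then have "n \<le> m" by (rule min)
      then show False using qr(4) g(5) \<open>gn r = of_nat m\<close> by simp
    qed
    then show ?thesis using qr(1,3) unfolding gdvd_def by (metis add_0_right mult.commute)
  qed
  have "gdvd g a" by (rule key[OF a]) (intro exI[of _ 1] exI[of _ 0], auto)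
  moreover have "gdvd g b" by (rule key[OF b]) (intro exI[of _ 0] exI[of _ 1], auto)
  ultimately show ?thesis using g by blast
qed

lemma gauss_prime_divisor:
  "gauss_int z \<Longrightarrow> gn z > 1 \<Longrightarrow> \<exists>p. gauss_prime p \<and> gdvd p z"
proof (induction "nat \<lfloor>gn z\<rfloor>" arbitrary: z rule: less_induct)
  case less
  show ?case
  proof (cases "\<exists>d. gauss_int d \<and> gdvd d z \<and> 1 < gn d \<and> gn d < gn z")
    case True
    then obtain d where d: "gauss_int d" "gdvd d z" "1 < gn d" "gn d < gn z" by auto
    obtain nd nz :: nat where "gn d = nd" "gn z = nz" using gn_nat d(1) less.prems(1) by metis
    then have "nat \<lfloor>gn d\<rfloor> < nat \<lfloor>gn z\<rfloor>" using d by simp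
    then obtain p where "gauss_prime p" "gdvd p d" using less.hyps d by blast
    then show ?thesis using d(2) gdvd_trans by blast
  next
    case False
    have z0: "z \<noteq> 0" using less.prems by auto
    have nu: "\<not> gdvd z 1" using unit_gn less.prems by auto
    have "gauss_prime z" unfolding gauss_prime_def
    proof (intro conjI allI impI)
      fix a b assume a: "gauss_int a" and b: "gauss_int b" and dab: "gdvd z (a * b)"
      show "gdvd z a \<or> gdvd z b"
      proof (cases "gdvd z a")
        case True then show ?thesis by simp
      next
        case False
        note na = False
        obtain g x y where g: "gauss_int x" "gauss_int y" "g = z * x + a * y" "g \<noteq> 0" "gdvd g z" "gdvd g a"
          using gauss_bezout[OF less.prems(1) a z0] by auto
        have gg: "gauss_int g" using g a less.prems(1) by auto
        have "gn g \<le> gn z" using gdvd_gn_le g(5) z0 by auto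
        have "gn g \<ge> 1" using gn_ge1 gg g(4) by auto
        have "gdvd z b"
        proof (cases "gn g = 1")
          case True
          then have u: "g * cnj g = 1" by (simp add: mult_cnj_gn)
          have "b = (z * x + a * y) * cnj g * b" using u g(3) by simp
          also have "\<dots> = z * (x * cnj g * b) + (a * b) * (y * cnj g)" by (simp add: algebra_simps)
          finally have "b = z * (x * cnj g * b) + (a * b) * (y * cnj g)" .
          moreover have "gdvd z (z * (x * cnj g * b))" using g(1) b gg by (intro gdvd_triv gauss_int_mult gauss_int_cnj)
          moreover have "gdvd z ((a * b) * (y * cnj g))" using gauss_int_mult[OF g(2) gauss_int_cnj[OF gg]] by (rule gdvd_mult_right[OF dab])
          ultimately show ?thesis using gdvd_add by metis
        next
          case False
          then have "gn g = gn z" using \<open>gn g \<le> gn z\<close> \<open>gn g \<ge> 1\<close> gg g(5) \<open>\<not> (\<exists>d. _)\<close> by force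
          obtain c where c: "gauss_int c" "z = g * c" using g(5) unfolding gdvd_def by auto
          have "gn c = 1" using \<open>gn g = gn z\<close> c(2) gn_mult[of g c] g(4) by (metis gn_eq_0 mult_cancel_left1)
          then have "c * cnj c = 1" by (simp add: mult_cnj_gn)
          then have "g = z * cnj c" using c(2) by (metis mult.assoc mult.right_neutral)
          then have "gdvd z g" using c(1) unfolding gdvd_def by auto
          then have "gdvd z a" using g(6) gdvd_trans by blast
          then show ?thesis using na by simp
        qed
        then show ?thesis by simp
      qed
    qed (use less.prems z0 nu in auto)
    then show ?thesis by auto
  qed
qed

lemma gauss_prime_gn: "gauss_prime p \<Longrightarrow> gn p \<ge> 2"
proof -
  assume p: "gauss_prime p"
  then have g: "gauss_int p" "p \<noteq> 0" "\<not> gdvd p 1" unfolding gauss_prime_def by auto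
  obtain n :: nat where n: "gn p = n" using gn_nat g by blast
  have "n \<noteq> 0" using n g gn_eq_0 by (metis of_nat_0)
  moreover have "n \<noteq> 1" using n g unit_gn by auto
  ultimately show ?thesis using n by simp
qed

lemma gauss_prime_cnj: "gauss_prime p \<Longrightarrow> gauss_prime (cnj p)"
  unfolding gauss_prime_def
proof (elim conjE, intro conjI allI impI)
  fix a b assume "gauss_int p" "p \<noteq> 0" "\<not> gdvd p 1"
    and pr: "\<forall>a b. gauss_int a \<longrightarrow> gauss_int b \<longrightarrow> gdvd p (a * b) \<longrightarrow> gdvd p a \<or> gdvd p b"
    and "gauss_int a" "gauss_int b" "gdvd (cnj p) (a * b)"
  then have "gdvd p (cnj a * cnj b)" by (metis complex_cnj_cnj complex_cnj_mult gdvd_cnj)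
  then have "gdvd p (cnj a) \<or> gdvd p (cnj b)" using pr \<open>gauss_int a\<close> \<open>gauss_int b\<close> by auto
  then show "gdvd (cnj p) a \<or> gdvd (cnj p) b" by (metis complex_cnj_cnj gdvd_cnj)
qed (auto simp: gdvd_cnj_iff[of p 1, simplified])

definition vge :: "complex \<Rightarrow> int \<Rightarrow> complex \<Rightarrow> bool" where
  "vge p m x \<longleftrightarrow> (\<exists>u v. gauss_int u \<and> gauss_int v \<and> \<not> gdvd p v \<and> x = p powi m * u / v)"

definition vex :: "complex \<Rightarrow> int \<Rightarrow> complex \<Rightarrow> bool" where
  "vex p m x \<longleftrightarrow> (\<exists>u v. gauss_int u \<and> gauss_int v \<and> \<not> gdvd p u \<and> \<not> gdvd p v \<and> x = p powi m * u / v)"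

lemma vgeI: "gauss_int u \<Longrightarrow> gauss_int v \<Longrightarrow> \<not> gdvd p v \<Longrightarrow> x = p powi m * u / v \<Longrightarrow> vge p m x"
  unfolding vge_def by (intro exI conjI)
lemma vexI: "gauss_int u \<Longrightarrow> gauss_int v \<Longrightarrow> \<not> gdvd p u \<Longrightarrow> \<not> gdvd p v \<Longrightarrow> x = p powi m * u / v \<Longrightarrow> vex p m x"
  unfolding vex_def by (intro exI conjI)

lemma ndvd_nz: "\<not> gdvd p v \<Longrightarrow> v \<noteq> 0" by auto

context
  fixes p assumes p: "gauss_prime p"
begin

lemma pg: "gauss_int p" and p0: "p \<noteq> 0" and pnu: "\<not> gdvd p 1"
  using p unfolding gauss_prime_def by auto

lemma ndvd_mult: "gauss_int a \<Longrightarrow> gauss_int b \<Longrightarrow> \<not> gdvd p a \<Longrightarrow> \<not> gdvd p b \<Longrightarrow> \<not> gdvd p (a * b)"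
  using p unfolding gauss_prime_def by blast

lemma vge_0[simp,intro]: "vge p m 0"
  unfolding vge_def using pnu by (intro exI[of _ 0] exI[of _ 1]) auto

lemma vge_int: "gauss_int z \<Longrightarrow> vge p 0 z"
  unfolding vge_def using pnu by (intro exI[of _ z] exI[of _ 1]) auto

lemma vge_of_int[simp,intro]: "vge p 0 (of_int n)"
  by (rule vge_int) simp

lemma vge_add: "vge p m x \<Longrightarrow> vge p m y \<Longrightarrow> vge p m (x + y)"
proof -
  assume "vge p m x" "vge p m y"
  then obtain u v u' v' where a: "gauss_int u" "gauss_int v" "\<not> gdvd p v" "x = p powi m * u / v"
    and b: "gauss_int u'" "gauss_int v'" "\<not> gdvd p v'" "y = p powi m * u' / v'"
    unfolding vge_def by blast
  have "x + y = p powi m * (u * v' + u' * v) / (v * v')"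
    using a b ndvd_nz[of p v] ndvd_nz[of p v'] by (simp add: field_simps)
  moreover have "\<not> gdvd p (v * v')" using ndvd_mult a b by auto
  ultimately show ?thesis by (intro vgeI[of "u * v' + u' * v" "v * v'"]) (use a b in auto)
qed

lemma vge_minus: "vge p m x \<Longrightarrow> vge p m (- x)"
proof -
  assume "vge p m x"
  then obtain u v where a: "gauss_int u" "gauss_int v" "\<not> gdvd p v" "x = p powi m * u / v"
    unfolding vge_def by blast
  then have "- x = p powi m * (- u) / v" by simp
  then show ?thesis by (intro vgeI[of "- u" v]) (use a in auto)
qed

lemma vge_diff: "vge p m x \<Longrightarrow> vge p m y \<Longrightarrow> vge p m (x - y)"
  using vge_add[of m x "- y"] vge_minus by simp

lemma vge_mult: "vge p m x \<Longrightarrow> vge p n y \<Longrightarrow> vge p (m + n) (x * y)"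
proof -
  assume "vge p m x" "vge p n y"
  then obtain u v u' v' where a: "gauss_int u" "gauss_int v" "\<not> gdvd p v" "x = p powi m * u / v"
    and b: "gauss_int u'" "gauss_int v'" "\<not> gdvd p v'" "y = p powi n * u' / v'"
    unfolding vge_def by blast
  have "x * y = p powi (m + n) * (u * u') / (v * v')"
    using a b p0 by (simp add: power_int_add field_simps)
  moreover have "\<not> gdvd p (v * v')" using ndvd_mult a b by auto
  ultimately show ?thesis by (intro vgeI[of "u * u'" "v * v'"]) (use a b in auto)
qed

lemma vge_mono: "n \<le> m \<Longrightarrow> vge p m x \<Longrightarrow> vge p n x"
proof -
  assume nm: "n \<le> m" and "vge p m x"
  then obtain u v where a: "gauss_int u" "gauss_int v" "\<not> gdvd p v" "x = p powi m * u / v"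
    unfolding vge_def by blast
  have "p powi m = p powi (n + (m - n))" by simp
  also have "\<dots> = p powi n * p powi (m - n)" by (rule power_int_add) (use p0 in simp)
  also have "p powi (m - n) = p ^ nat (m - n)" using nm by (simp add: power_int_def)
  finally have "p powi m = p powi n * p ^ nat (m - n)" .
  then have "x = p powi n * (p ^ nat (m - n) * u) / v" using a by (simp add: field_simps)
  then show ?thesis by (intro vgeI[of "p ^ nat (m - n) * u" v]) (use a pg in auto)
qed

lemma vge_sum: "(\<And>i. i \<in> A \<Longrightarrow> vge p m (f i)) \<Longrightarrow> vge p m (sum f A)"
  by (induction A rule: infinite_finite_induct) (auto intro: vge_add)

lemma vex_vge: "vex p m x \<Longrightarrow> vge p m x"
  unfolding vex_def vge_def by blast

lemma vex_nz: "vex p m x \<Longrightarrow> x \<noteq> 0"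
  unfolding vex_def using p0 by auto

lemma vex_not_vge: "vex p m x \<Longrightarrow> \<not> vge p (m + 1) x"
proof
  assume "vex p m x" "vge p (m + 1) x"
  then obtain u v u' v' where a: "gauss_int u" "gauss_int v" "\<not> gdvd p u" "\<not> gdvd p v" "x = p powi m * u / v"
    and b: "gauss_int u'" "gauss_int v'" "\<not> gdvd p v'" "x = p powi (m + 1) * u' / v'"
    unfolding vge_def vex_def by blast
  have "p powi m * u / v = p powi m * p * u' / v'" using a b p0 by (simp add: power_int_add)
  then have "u * v' = p * (u' * v)" using p0 ndvd_nz[OF a(4)] ndvd_nz[OF b(3)]
    by (simp add: field_simps)
  then have "gdvd p (u * v')" using b a unfolding gdvd_def by auto
  then show False using ndvd_mult a b by blast
qed

lemma vge_not_vex: "vge p m x \<Longrightarrow> \<not> vge p (m + 1) x \<Longrightarrow> vex p m x"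
proof -
  assume "vge p m x" and n: "\<not> vge p (m + 1) x"
  then obtain u v where a: "gauss_int u" "gauss_int v" "\<not> gdvd p v" "x = p powi m * u / v"
    unfolding vge_def by blast
  show ?thesis
  proof (cases "gdvd p u")
    case True
    then obtain c where c: "gauss_int c" "u = p * c" unfolding gdvd_def by auto
    then have "x = p powi (m + 1) * c / v" using a p0 by (simp add: power_int_add)
    then have "vge p (m + 1) x" by (intro vgeI[of c v]) (use a c in auto)
    then show ?thesis using n by simp
  next
    case False
    then show ?thesis by (intro vexI[of u v]) (use a in auto)
  qed
qed

lemma vex_le: "vex p m x \<Longrightarrow> vge p n x \<Longrightarrow> n \<le> m"
proof (rule ccontr)
  assume a: "vex p m x" "vge p n x" "\<not> n \<le> m"
  then have "vge p (m + 1) x" using vge_mono[of "m + 1" n x] by simp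
  then show False using vex_not_vge a by blast
qed

lemma vex_unique: "vex p m x \<Longrightarrow> vex p n x \<Longrightarrow> m = n"
proof -
  assume a: "vex p m x" "vex p n x"
  have "n \<le> m" using vex_le[OF a(1) vex_vge[OF a(2)]] .
  moreover have "m \<le> n" using vex_le[OF a(2) vex_vge[OF a(1)]] .
  ultimately show ?thesis by simp
qed

lemma vex_add_strict: "vex p m x \<Longrightarrow> vge p (m + 1) y \<Longrightarrow> vex p m (x + y)"
proof -
  assume a: "vex p m x" and b: "vge p (m + 1) y"
  have "vge p m y" using b vge_mono[of m "m + 1" y] by simp
  then have "vge p m (x + y)" using vge_add vex_vge a by blast
  moreover have "\<not> vge p (m + 1) (x + y)"
  proof
    assume "vge p (m + 1) (x + y)"
    then have "vge p (m + 1) ((x + y) - y)" using vge_diff b by blast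
    then show False using vex_not_vge a by simp
  qed
  ultimately show ?thesis using vge_not_vex by blast
qed

lemma vex_mult: "vex p m x \<Longrightarrow> vex p n y \<Longrightarrow> vex p (m + n) (x * y)"
proof -
  assume "vex p m x" "vex p n y"
  then obtain u v u' v' where a: "gauss_int u" "gauss_int v" "\<not> gdvd p u" "\<not> gdvd p v" "x = p powi m * u / v"
    and b: "gauss_int u'" "gauss_int v'" "\<not> gdvd p u'" "\<not> gdvd p v'" "y = p powi n * u' / v'"
    unfolding vex_def by blast
  have "x * y = p powi (m + n) * (u * u') / (v * v')"
    using a b p0 by (simp add: power_int_add field_simps)
  moreover have "\<not> gdvd p (v * v')" "\<not> gdvd p (u * u')" using ndvd_mult a b by auto
  ultimately show ?thesis by (intro vexI[of "u * u'" "v * v'"]) (use a b in auto)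
qed

lemma vex_inverse: "vex p m x \<Longrightarrow> vex p (- m) (inverse x)"
proof -
  assume "vex p m x"
  then obtain u v where a: "gauss_int u" "gauss_int v" "\<not> gdvd p u" "\<not> gdvd p v" "x = p powi m * u / v"
    unfolding vex_def by blast
  have "inverse x = p powi (- m) * v / u" using a p0 by (simp add: power_int_minus field_simps)
  then show ?thesis by (intro vexI[of v u]) (use a in auto)
qed

lemma vex_divide: "vex p m x \<Longrightarrow> vex p n y \<Longrightarrow> vex p (m - n) (x / y)"
  using vex_mult[of m x "- n" "inverse y"] vex_inverse by (simp add: divide_inverse)

lemma vge_divide: "vge p m x \<Longrightarrow> vex p n y \<Longrightarrow> vge p (m - n) (x / y)"
  using vge_mult[of m x "- n" "inverse y"] vex_inverse vex_vge by (simp add: divide_inverse)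

lemma vex_power: "vex p m x \<Longrightarrow> vex p (m * int n) (x ^ n)"
proof (induction n)
  case 0
  have "vex p 0 1" unfolding vex_def using pnu by (intro exI[of _ 1] exI[of _ 1]) auto
  then show ?case by simp
next
  case (Suc n)
  then have "vex p (m + m * int n) (x * x ^ n)" using vex_mult by blast
  then show ?case by (simp add: algebra_simps)
qed

lemma vex_powi: "vex p m x \<Longrightarrow> vex p (m * t) (x powi t)"
proof (cases "t \<ge> 0")
  case True
  assume "vex p m x"
  then have "vex p (m * int (nat t)) (x ^ nat t)" by (rule vex_power)
  then show ?thesis using True by (simp add: power_int_def)
next
  case False
  assume "vex p m x"
  then have "vex p (- (m * int (nat (- t)))) (inverse (x ^ nat (- t)))" using vex_power vex_inverse by blast
  then show ?thesis using False by (simp add: power_int_def power_inverse)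
qed

lemma vge_dvd: "gauss_int z \<Longrightarrow> vge p 1 z \<longleftrightarrow> gdvd p z"
proof
  assume z: "gauss_int z" and "vge p 1 z"
  then obtain u v where a: "gauss_int u" "gauss_int v" "\<not> gdvd p v" "z = p powi 1 * u / v"
    unfolding vge_def by blast
  then have "z * v = p * u" using ndvd_nz[OF a(3)] by (simp add: field_simps)
  then have "gdvd p (z * v)" using a unfolding gdvd_def by auto
  then show "gdvd p z" using p z a unfolding gauss_prime_def by blast
next
  assume "gauss_int z" "gdvd p z"
  then obtain c where "gauss_int c" "z = p * c" unfolding gdvd_def by auto
  then show "vge p 1 z" unfolding vge_def using pnu by (intro exI[of _ c] exI[of _ 1]) auto
qed

lemma vex0_int: "gauss_int z \<Longrightarrow> \<not> gdvd p z \<Longrightarrow> vex p 0 z"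
  unfolding vex_def using pnu by (intro exI[of _ z] exI[of _ 1]) auto

lemma vex_exists_int: "gauss_int z \<Longrightarrow> z \<noteq> 0 \<Longrightarrow> \<exists>m\<ge>0. vex p m z"
proof (induction "nat \<lfloor>gn z\<rfloor>" arbitrary: z rule: less_induct)
  case less
  show ?case
  proof (cases "gdvd p z")
    case False
    then show ?thesis using vex0_int less.prems by blast
  next
    case True
    then obtain c where c: "gauss_int c" "z = p * c" unfolding gdvd_def by auto
    then have c0: "c \<noteq> 0" using less.prems by auto
    have "gn z = gn p * gn c" using c gn_mult by simp
    moreover have "gn p \<ge> 2" using gauss_prime_gn p by simp
    moreover have "gn c \<ge> 1" using gn_ge1 c c0 by simp
    moreover have "gn p * gn c \<ge> 2 * gn c" using mult_right_mono[of 2 "gn p" "gn c"] \<open>gn p \<ge> 2\<close> \<open>gn c \<ge> 1\<close> by simp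
    ultimately have "gn c < gn z" by linarith
    moreover obtain nc nz :: nat where "gn c = nc" "gn z = nz" using gn_nat c(1) less.prems(1) by metis
    ultimately have "nat \<lfloor>gn c\<rfloor> < nat \<lfloor>gn z\<rfloor>" by simp
    then obtain m where m: "m \<ge> 0" "vex p m c" using less.hyps c c0 by blast
    have "vex p 1 p" unfolding vex_def using pnu pg by (intro exI[of _ 1] exI[of _ 1]) auto
    then have "vex p (1 + m) z" using vex_mult m c by simp
    then show ?thesis using m by (intro exI[of _ "1 + m"]) auto
  qed
qed

lemma gauss_rat_denom: "gauss_rat x \<Longrightarrow> \<exists>n::int. n > 0 \<and> gauss_int (of_int n * x)"
proof -
  assume "gauss_rat x"
  then have "Re x \<in> \<rat>" "Im x \<in> \<rat>" unfolding gauss_rat_def by auto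
  obtain a b :: int where ab: "b > 0" "Re x = of_int a / of_int b"
    using \<open>Re x \<in> \<rat>\<close> by (elim Rats_cases') blast
  obtain c d :: int where cd: "d > 0" "Im x = of_int c / of_int d"
    using \<open>Im x \<in> \<rat>\<close> by (elim Rats_cases') blast
  have "Re (of_int (b * d) * x) = of_int (b * d) * Re x" by simp
  also have "\<dots> = of_int (a * d)" using ab by (simp add: field_simps)
  finally have 1: "Re (of_int (b * d) * x) = of_int (a * d)" .
  have "Im (of_int (b * d) * x) = of_int (b * d) * Im x" by simp
  also have "\<dots> = of_int (c * b)" using cd by (simp add: field_simps)
  finally have 2: "Im (of_int (b * d) * x) = of_int (c * b)" .
  have "gauss_int (of_int (b * d) * x)" unfolding gauss_int_def 1 2 by simp
  moreover have "b * d > 0" using ab cd by simp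
  ultimately show ?thesis by blast
qed

lemma vex_exists: "gauss_rat x \<Longrightarrow> x \<noteq> 0 \<Longrightarrow> \<exists>m. vex p m x"
proof -
  assume "gauss_rat x" "x \<noteq> 0"
  then obtain n :: int where n: "n > 0" "gauss_int (of_int n * x)" using gauss_rat_denom by blast
  obtain m1 where m1: "vex p m1 (of_int n * x)" using vex_exists_int n \<open>x \<noteq> 0\<close> by fastforce
  obtain m2 where m2: "vex p m2 (of_int n)" using vex_exists_int[of "of_int n"] n by fastforce
  have "vex p (m1 - m2) ((of_int n * x) / of_int n)" using vex_divide m1 m2 by blast
  then show ?thesis using n by auto
qed

lemma gauss_val_eq: "vex p m x \<Longrightarrow> gauss_val p x = m"
proof -
  assume m: "vex p m x"
  have "gauss_val p x = (THE n. vex p n x)" unfolding gauss_val_def vex_def by (rule refl)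
  also have "\<dots> = m"
  proof (rule the_equality)
    show "vex p m x" by (rule m)
    fix n assume "vex p n x" then show "n = m" using vex_unique m by blast
  qed
  finally show ?thesis .
qed

lemma vge_exists_vex: "gauss_rat x \<Longrightarrow> x \<noteq> 0 \<Longrightarrow> vge p m x \<Longrightarrow> \<exists>n\<ge>m. vex p n x"
  using vex_exists vex_le by blast

end

lemma vge_cnj: "vge (cnj p) m (cnj x) \<longleftrightarrow> vge p m x"
proof -
  have *: "vge (cnj p) m (cnj x)" if h: "vge p m x" for p x
  proof -
    obtain u v where a: "gauss_int u" "gauss_int v" "\<not> gdvd p v" "x = p powi m * u / v"
      using h unfolding vge_def by blast
    have "cnj x = cnj p powi m * cnj u / cnj v" using a by simp
    moreover have "\<not> gdvd (cnj p) (cnj v)" using a gdvd_cnj_iff by simp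
    ultimately show ?thesis by (intro vgeI[of "cnj u" "cnj v"]) (use a in auto)
  qed
  show ?thesis using *[of p x] *[of "cnj p" "cnj x"] by auto
qed

lemma gauss_rat_add[intro]: "gauss_rat a \<Longrightarrow> gauss_rat b \<Longrightarrow> gauss_rat (a + b)"
  unfolding gauss_rat_def by auto
lemma gauss_rat_diff[intro]: "gauss_rat a \<Longrightarrow> gauss_rat b \<Longrightarrow> gauss_rat (a - b)"
  unfolding gauss_rat_def by auto
lemma gauss_rat_minus[intro]: "gauss_rat a \<Longrightarrow> gauss_rat (- a)"
  unfolding gauss_rat_def by auto
lemma gauss_rat_mult[intro]: "gauss_rat a \<Longrightarrow> gauss_rat b \<Longrightarrow> gauss_rat (a * b)"
  unfolding gauss_rat_def by auto
lemma gauss_rat_cnj[intro]: "gauss_rat a \<Longrightarrow> gauss_rat (cnj a)"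
  unfolding gauss_rat_def by auto
lemma gauss_rat_inverse[intro]: "gauss_rat a \<Longrightarrow> gauss_rat (inverse a)"
  unfolding gauss_rat_def by (auto simp: power2_eq_square)
lemma gauss_rat_divide[intro]: "gauss_rat a \<Longrightarrow> gauss_rat b \<Longrightarrow> gauss_rat (a / b)"
  by (simp add: divide_inverse gauss_rat_inverse gauss_rat_mult)
lemma gauss_rat_of_int[simp,intro]: "gauss_rat (of_int n)"
  unfolding gauss_rat_def by auto
lemma of_rat_complex: "(of_rat r :: complex) = complex_of_real (of_rat r)"
  by (cases r) (simp add: of_rat_rat)
lemma gauss_rat_of_rat[simp,intro]: "gauss_rat (of_rat r)"
  unfolding gauss_rat_def of_rat_complex by simp
lemma gauss_rat_int: "gauss_int a \<Longrightarrow> gauss_rat a"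
  unfolding gauss_rat_def gauss_int_def using Ints_subset_Rats by auto
lemma gauss_rat_power[intro]: "gauss_rat a \<Longrightarrow> gauss_rat (a ^ n)"
  by (induction n) (auto intro: gauss_rat_int)
lemma gauss_rat_powi[intro]: "gauss_rat a \<Longrightarrow> gauss_rat (a powi n)"
  unfolding power_int_def by (auto intro: gauss_rat_inverse gauss_rat_power)
lemma gauss_rat_sum[intro]: "(\<And>i. i \<in> A \<Longrightarrow> gauss_rat (f i)) \<Longrightarrow> gauss_rat (sum f A)"
  by (induction A rule: infinite_finite_induct) (auto intro: gauss_rat_int)

lemma cnj_of_rat[simp]: "cnj (of_rat r :: complex) = of_rat r"
  unfolding of_rat_complex by simp

context fixes p assumes p: "gauss_prime p"
begin

lemma gnp: "(cmod p)\<^sup>2 = gn p" by (simp add: gn_cmod)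

lemma padic_le: "gauss_rat x \<Longrightarrow> vge p m x \<Longrightarrow> padic_abs p x \<le> gn p powr (- real_of_int m)"
proof (cases "x = 0")
  case True then show ?thesis by (simp add: padic_abs_def)
next
  case False
  assume "gauss_rat x" "vge p m x"
  then obtain n where n: "n \<ge> m" "vex p n x" using vge_exists_vex[OF p] False by blast
  have g: "gn p \<ge> 2" using gauss_prime_gn p by simp
  have "padic_abs p x = gn p powr (- real_of_int n)"
    unfolding padic_abs_def using False gauss_val_eq[OF p n(2)] gnp by simp
  also have "\<dots> \<le> gn p powr (- real_of_int m)" using n g by (intro powr_mono) auto
  finally show ?thesis .
qed

lemma padic_small: "gauss_rat x \<Longrightarrow> padic_abs p x < gn p powr (- real_of_int m) \<Longrightarrow> vge p m x"
proof (cases "x = 0")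
  case True then show ?thesis using vge_0[OF p] by simp
next
  case False
  assume "gauss_rat x" and lt: "padic_abs p x < gn p powr (- real_of_int m)"
  then obtain n where n: "vex p n x" using vex_exists[OF p] False by blast
  have g: "gn p \<ge> 2" using gauss_prime_gn p by simp
  have "padic_abs p x = gn p powr (- real_of_int n)"
    unfolding padic_abs_def using False gauss_val_eq[OF p n] gnp by simp
  then have "gn p powr (- real_of_int n) < gn p powr (- real_of_int m)" using lt by simp
  then have "- real_of_int n < - real_of_int m" using g by (simp add: powr_less_cancel_iff)
  then have "m \<le> n" by simp
  then show ?thesis using vge_mono[OF p] vex_vge[OF p n] by blast
qed

end

fun Yf :: "complex \<Rightarrow> (int \<Rightarrow> int) \<Rightarrow> int \<Rightarrow> nat \<Rightarrow> complex" where
  "Yf a d k 0 = of_int (d k)"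
| "Yf a d k (Suc N) = a * Yf a d k N + of_int (d (k - int N - 1))"

fun Wf :: "int \<Rightarrow> int \<Rightarrow> int \<Rightarrow> (int \<Rightarrow> int) \<Rightarrow> int \<Rightarrow> nat \<Rightarrow> rat" where
  "Wf a0 a1 a2 d k 0 = 0"
| "Wf a0 a1 a2 d k (Suc 0) = of_int (d k) / of_int a2"
| "Wf a0 a1 a2 d k (Suc (Suc n)) = (of_int (d (k - int n - 1)) - of_int a1 * Wf a0 a1 a2 d k (Suc n) - of_int a0 * Wf a0 a1 a2 d k n) / of_int a2"

lemma Y_sum:
  assumes a0: "a \<noteq> 0"
  shows "(\<Sum>j\<in>{k - int N..k}. of_int (d j) * a powi (j - (k - int N))) = Yf a d k N"
proof (induction N)
  case 0
  have "{k - int 0..k} = {k}" by auto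
  then show ?case by simp
next
  case (Suc N)
  have set: "{k - int (Suc N)..k} = insert (k - int N - 1) {k - int N..k}" by auto
  have "(\<Sum>j\<in>{k - int (Suc N)..k}. of_int (d j) * a powi (j - (k - int (Suc N))))
      = of_int (d (k - int N - 1)) + (\<Sum>j\<in>{k - int N..k}. of_int (d j) * a powi (j - (k - int N) + 1))"
    unfolding set by (subst sum.insert) (auto simp: algebra_simps)
  also have "(\<Sum>j\<in>{k - int N..k}. of_int (d j) * a powi (j - (k - int N) + 1))
      = a * (\<Sum>j\<in>{k - int N..k}. of_int (d j) * a powi (j - (k - int N)))"
    unfolding sum_distrib_left using a0 by (intro sum.cong) (auto simp: power_int_add_1)
  finally show ?case using Suc by simp
qed

lemma S_Y:
  assumes a0: "a \<noteq> 0"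
  shows "(\<Sum>j\<in>{k - int N..k}. of_int (d j) * a powi j) = a powi (k - int N) * Yf a d k N"
proof -
  have "(\<Sum>j\<in>{k - int N..k}. of_int (d j) * a powi j)
     = (\<Sum>j\<in>{k - int N..k}. a powi (k - int N) * (of_int (d j) * a powi (j - (k - int N))))"
  proof (intro sum.cong refl)
    fix j
    have "a powi j = a powi ((k - int N) + (j - (k - int N)))" by simp
    also have "\<dots> = a powi (k - int N) * a powi (j - (k - int N))" by (rule power_int_add) (use a0 in simp)
    finally show "of_int (d j) * a powi j = a powi (k - int N) * (of_int (d j) * a powi (j - (k - int N)))"
      by simp
  qed
  also have "\<dots> = a powi (k - int N) * Yf a d k N"
    by (simp add: sum_distrib_left[symmetric] Y_sum[OF a0])
  finally show ?thesis .
qed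

lemma Y_Zring: "Yf a d k N \<in> Zring a"
proof (induction N)
  case 0
  show ?case unfolding Zring_def by (rule CollectI, rule exI[of _ "\<lambda>i. d k"], rule exI[of _ 1]) simp
next
  case (Suc N)
  then obtain c n where c: "Yf a d k N = (\<Sum>i<n. of_int (c i) * a ^ i)" unfolding Zring_def by auto
  define c' where "c' = (\<lambda>i. case i of 0 \<Rightarrow> d (k - int N - 1) | Suc j \<Rightarrow> c j)"
  have "(\<Sum>i<Suc n. of_int (c' i) * a ^ i) = of_int (d (k - int N - 1)) + (\<Sum>i<n. of_int (c i) * a ^ Suc i)"
    unfolding sum.lessThan_Suc_shift c'_def by simp
  also have "\<dots> = of_int (d (k - int N - 1)) + a * (\<Sum>i<n. of_int (c i) * a ^ i)"
    by (simp add: sum_distrib_left algebra_simps)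
  also have "\<dots> = Yf a d k (Suc N)" using c by simp
  finally have "Yf a d k (Suc N) = (\<Sum>i<Suc n. of_int (c' i) * a ^ i)" by simp
  then show ?case unfolding Zring_def by blast
qed

context
  fixes \<alpha> :: complex and a0 a1 a2 k :: int and d :: "int \<Rightarrow> int"
  assumes a2nz: "a2 \<noteq> 0" and anz: "\<alpha> \<noteq> 0"
    and eq: "of_int a2 * \<alpha>\<^sup>2 + of_int a1 * \<alpha> + of_int a0 = 0"
begin

abbreviation "Wc n \<equiv> (of_rat (Wf a0 a1 a2 d k n) :: complex)"
abbreviation "Y N \<equiv> Yf \<alpha> d k N"

lemma Wc_rec: "of_int a2 * Wc (Suc (Suc n)) = of_int (d (k - int n - 1)) - of_int a1 * Wc (Suc n) - of_int a0 * Wc n"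
proof -
  define R where "R = (of_int (d (k - int n - 1)) - of_int a1 * Wf a0 a1 a2 d k (Suc n) - of_int a0 * Wf a0 a1 a2 d k n :: rat)"
  have "Wf a0 a1 a2 d k (Suc (Suc n)) = R / of_int a2" unfolding R_def by simp
  then have "Wc (Suc (Suc n)) = of_rat R / of_int a2" by (simp add: of_rat_divide)
  then have "of_int a2 * Wc (Suc (Suc n)) = of_rat R" using a2nz by simp
  also have "\<dots> = of_int (d (k - int n - 1)) - of_int a1 * Wc (Suc n) - of_int a0 * Wc n"
    unfolding R_def by (simp add: of_rat_mult of_rat_diff)
  finally show ?thesis .
qed

lemma Wc1: "of_int a2 * Wc (Suc 0) = of_int (d k)"
proof -
  have "Wc (Suc 0) = of_int (d k) / of_int a2" by (simp add: of_rat_divide)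
  then show ?thesis using a2nz by simp
qed

lemma eq2: "of_int a2 * \<alpha>\<^sup>2 + of_int a1 * \<alpha> = - of_int a0" using eq by (simp add: eq_neg_iff_add_eq_0 algebra_simps)

lemma Y_W: "Y N = of_int a2 * Wc (Suc N) + (of_int a1 + of_int a2 * \<alpha>) * Wc N"
proof (induction N)
  case 0
  show ?case using Wc1 by simp
next
  case (Suc N)
  have e2: "of_int a2 * \<alpha>\<^sup>2 + of_int a1 * \<alpha> = - of_int a0" using eq by (simp add: eq_neg_iff_add_eq_0 algebra_simps)
  have "Y (Suc N) = \<alpha> * (of_int a2 * Wc (Suc N) + (of_int a1 + of_int a2 * \<alpha>) * Wc N) + of_int (d (k - int N - 1))"
    using Suc by simp
  also have "\<dots> = of_int a2 * \<alpha> * Wc (Suc N) + (of_int a2 * \<alpha>\<^sup>2 + of_int a1 * \<alpha>) * Wc N + of_int (d (k - int N - 1))"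
    by (simp add: algebra_simps power2_eq_square)
  also have "\<dots> = of_int a2 * \<alpha> * Wc (Suc N) - of_int a0 * Wc N + of_int (d (k - int N - 1))"
    unfolding e2 by simp
  also have "\<dots> = of_int a2 * Wc (Suc (Suc N)) + (of_int a1 + of_int a2 * \<alpha>) * Wc (Suc N)"
    unfolding distrib_right Wc_rec by (simp add: algebra_simps)
  finally show ?case .
qed

lemma Y_cnj: "cnj (Y N) = of_int a2 * Wc (Suc N) + (of_int a1 + of_int a2 * cnj \<alpha>) * Wc N"
  unfolding Y_W by simp

lemma Y_Lambda2:
  assumes ints: "\<And>n. Wf a0 a1 a2 d k n \<in> \<int>"
  shows "Y N \<in> (\<lambda>z. inverse \<alpha> * z) ` Zring (inverse \<alpha>)"
proof -
  obtain w0 where w0: "Wf a0 a1 a2 d k N = of_int w0" using ints by (meson Ints_cases)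
  obtain w1 where w1: "Wf a0 a1 a2 d k (Suc N) = of_int w1" using ints by (meson Ints_cases)
  have W0: "Wc N = of_int w0" unfolding w0 by simp
  have W1: "Wc (Suc N) = of_int w1" unfolding w1 by simp
  have e3: "of_int a2 * \<alpha> = - of_int a1 - of_int a0 * inverse \<alpha>"
  proof -
    have ab: "\<alpha> * inverse \<alpha> = 1" using anz by simp
    have "(of_int a2 * \<alpha>\<^sup>2 + of_int a1 * \<alpha> + of_int a0) * inverse \<alpha> = 0" using eq by simp
    moreover have "(of_int a2 * \<alpha>\<^sup>2 + of_int a1 * \<alpha> + of_int a0) * inverse \<alpha>
       = of_int a2 * \<alpha> * (\<alpha> * inverse \<alpha>) + of_int a1 * (\<alpha> * inverse \<alpha>) + of_int a0 * inverse \<alpha>"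
      by (simp add: power2_eq_square algebra_simps)
    ultimately have "of_int a2 * \<alpha> + of_int a1 + of_int a0 * inverse \<alpha> = 0"
      unfolding ab by simp
    then show ?thesis by (simp add: eq_neg_iff_add_eq_0 algebra_simps)
  qed
  define c where "c = (\<lambda>i::nat. if i = 0 then - a1 * w1 - a0 * w0 else - a0 * w1)"
  have "\<alpha> * Y N = of_int a2 * \<alpha> * Wc (Suc N) + (of_int a2 * \<alpha>\<^sup>2 + of_int a1 * \<alpha>) * Wc N"
    unfolding Y_W by (simp add: algebra_simps power2_eq_square)
  also have "\<dots> = of_int a2 * \<alpha> * Wc (Suc N) - of_int a0 * Wc N"
    unfolding eq2 by simp
  also have "\<dots> = (- of_int a1 - of_int a0 * inverse \<alpha>) * Wc (Suc N) - of_int a0 * Wc N"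
    unfolding e3 by simp
  also have "\<dots> = (\<Sum>i<2. of_int (c i) * (inverse \<alpha>) ^ i)"
    unfolding W0 W1 c_def by (simp add: numeral_2_eq_2 algebra_simps)
  finally have "\<alpha> * Y N = (\<Sum>i<2. of_int (c i) * (inverse \<alpha>) ^ i)" .
  moreover have "Y N = inverse \<alpha> * (\<alpha> * Y N)" using anz by simp
  ultimately have "Y N = inverse \<alpha> * (\<Sum>i<2. of_int (c i) * (inverse \<alpha>) ^ i)" by simp
  moreover have "(\<Sum>i<2. of_int (c i) * (inverse \<alpha>) ^ i) \<in> Zring (inverse \<alpha>)"
    unfolding Zring_def by blast
  ultimately show ?thesis by blast
qed

end

lemma vex_minus: "gauss_prime p \<Longrightarrow> vex p m x \<Longrightarrow> vex p m (- x)"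
proof -
  assume p: "gauss_prime p" and "vex p m x"
  then obtain u v where a: "gauss_int u" "gauss_int v" "\<not> gdvd p u" "\<not> gdvd p v" "x = p powi m * u / v"
    unfolding vex_def by blast
  have "- x = p powi m * (- u) / v" using a by simp
  moreover have "\<not> gdvd p (- u)" using a(3) gdvd_cnj_iff
    by (metis gdvd_def gauss_int_minus minus_minus mult_minus_right)
  ultimately show ?thesis by (intro vexI[of "- u" v]) (use a in auto)
qed

lemma tendsto_bound:
  fixes f :: "int \<Rightarrow> real" and c :: real and e :: int
  assumes c: "c > 1" and e: "e \<ge> 1" and b: "\<And>l. 0 \<le> f l \<and> f l \<le> c powr (- real_of_int (e - e * l))"
  shows "(f \<longlongrightarrow> 0) at_bot"
proof (rule order_tendstoI)
  fix a :: real assume "a < 0"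
  then show "eventually (\<lambda>l. a < f l) at_bot" using b by (intro always_eventually) (auto intro: less_le_trans)
next
  fix a :: real assume a: "a > 0"
  define L where "L = min 1 \<lfloor>log c a\<rfloor>"
  have "\<forall>l\<le>L. f l < a"
  proof (intro allI impI)
    fix l assume l: "l \<le> L"
    have "- real_of_int (e - e * l) = real_of_int e * (real_of_int l - 1)" by (simp add: algebra_simps)
    also have "\<dots> \<le> 1 * (real_of_int l - 1)"
      using l e unfolding L_def by (intro mult_right_mono_neg) auto
    finally have 1: "- real_of_int (e - e * l) \<le> real_of_int l - 1" by simp
    have "real_of_int l \<le> real_of_int \<lfloor>log c a\<rfloor>" using l unfolding L_def by simp
    also have "\<dots> \<le> log c a" by simp
    finally have 2: "real_of_int l - 1 < log c a" by simp
    have "f l \<le> c powr (- real_of_int (e - e * l))" using b by simp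
    also have "\<dots> \<le> c powr (real_of_int l - 1)" using 1 c by (intro powr_mono) auto
    also have "\<dots> < c powr (log c a)" using 2 c by (intro powr_less_mono) auto
    also have "\<dots> = a" using a c by simp
    finally show "f l < a" .
  qed
  then show "eventually (\<lambda>l. f l < a) at_bot" unfolding eventually_at_bot_linorder by blast
qed

lemma nonint_prime:
  fixes r :: rat
  assumes "r \<notin> \<int>"
  shows "\<exists>p. gauss_prime p \<and> \<not> vge p 0 (of_rat r)"
proof -
  obtain a b where ab: "quotient_of r = (a, b)" by (cases "quotient_of r") auto
  have b0: "b > 0" using quotient_of_denom_pos[OF ab] .
  have cop: "coprime a b" using quotient_of_coprime[OF ab] .
  have r: "r = of_int a / of_int b" using quotient_of_div[OF ab] .
  have b1: "b \<noteq> 1" using assms r by auto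
  have "gn (of_int b) > 1"
  proof -
    have "gn (of_int b) = (real_of_int b)\<^sup>2" unfolding gn_def by simp
    moreover have "real_of_int b \<ge> 2" using b0 b1 by linarith
    moreover have "real_of_int b * real_of_int b \<ge> 2 * 2"
      using mult_mono[of 2 "real_of_int b" 2 "real_of_int b"] \<open>real_of_int b \<ge> 2\<close> by simp
    ultimately show ?thesis by (simp add: power2_eq_square)
  qed
  then obtain p where p: "gauss_prime p" "gdvd p (of_int b)"
    using gauss_prime_divisor[of "of_int b"] by auto
  have na: "\<not> gdvd p (of_int a)"
  proof
    assume pa: "gdvd p (of_int a)"
    obtain u v where uv: "u * a + v * b = gcd a b" using bezout_int by blast
    then have "u * a + v * b = 1" using cop by simp
    then have "(1::complex) = of_int u * of_int a + of_int v * of_int b"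
      by (metis of_int_1 of_int_add of_int_mult)
    moreover have "gdvd p (of_int u * of_int a + of_int v * of_int b)"
      using pa p(2) by (intro gdvd_add gdvd_mult_left) auto
    ultimately show False using p(1) unfolding gauss_prime_def by auto
  qed
  have va: "vex p 0 (of_int a)" using vex0_int[OF p(1)] na by simp
  obtain m where m: "m \<ge> 0" "vex p m (of_int b)" using vex_exists_int[OF p(1), of "of_int b"] b0 by auto
  have "vge p 1 (of_int b)" using vge_dvd[OF p(1)] p(2) by simp
  then have m1: "m \<ge> 1" using vex_le[OF p(1) m(2)] by simp
  have "(of_rat r :: complex) = of_int a / of_int b" unfolding r by (simp add: of_rat_divide)
  then have "vex p (0 - m) (of_rat r)" using vex_divide[OF p(1) va m(2)] by simp
  then have "\<not> vge p 0 (of_rat r)" using vex_le[OF p(1)] m1 by fastforce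
  then show ?thesis using p(1) by blast
qed

context
  fixes \<alpha> num den :: complex and a0 a1 a2 k :: int and d :: "int \<Rightarrow> int"
  assumes ar: "gauss_rat \<alpha>" and im: "Im \<alpha> \<noteq> 0" and ab: "cmod \<alpha> > 1"
    and gcd1: "gcd (gcd a0 a1) a2 = 1" and a2pos: "a2 > 0"
    and eq: "of_int a2 * \<alpha>\<^sup>2 + of_int a1 * \<alpha> + of_int a0 = 0"
    and gnum: "gauss_int num" and gden: "gauss_int den" and al: "\<alpha> = num / den"
    and cop: "\<forall>p. gauss_prime p \<longrightarrow> \<not> (gdvd p num \<and> gdvd p den)"
begin

lemma anz: "\<alpha> \<noteq> 0" using ab by auto
lemma den0: "den \<noteq> 0" using anz al by auto
lemma num0: "num \<noteq> 0" using anz al by auto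
lemma a2nz: "a2 \<noteq> 0" using a2pos by simp

abbreviation Wk :: "nat \<Rightarrow> complex" where "Wk n \<equiv> of_rat (Wf a0 a1 a2 d k n)"
abbreviation Yk :: "nat \<Rightarrow> complex" where "Yk N \<equiv> Yf \<alpha> d k N"
abbreviation S :: "int \<Rightarrow> complex" where "S l \<equiv> (\<Sum>j\<in>{l..k}. of_int (d j) * \<alpha> powi j)"

lemmas YW = Y_W[OF a2nz anz eq]
lemmas Ycnj = Y_cnj[OF a2nz anz eq]
lemmas Wrec = Wc_rec[OF a2nz anz eq]
lemmas W1 = Wc1[OF a2nz anz eq]

lemma gauss_rat_Y: "gauss_rat (Yk N)"
  by (induction N) (auto intro: gauss_rat_add gauss_rat_mult ar)

lemma gauss_rat_S: "gauss_rat (S l)"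
  by (intro gauss_rat_sum gauss_rat_mult gauss_rat_of_int gauss_rat_powi ar)

lemma valpha_ndvd: "gauss_prime q \<Longrightarrow> \<not> gdvd q den \<Longrightarrow> vge q 0 \<alpha>"
proof -
  assume q: "gauss_prime q" "\<not> gdvd q den"
  have "vex q 0 den" using vex0_int[OF q(1) gden q(2)] .
  then have "vge q (0 - 0) (num / den)" using vge_divide[OF q(1) vge_int[OF q(1) gnum]] by blast
  then show ?thesis using al by simp
qed

lemma Tprime:
  assumes q: "gauss_prime q" and qd: "gdvd q den" and e: "vex q e den"
  shows "e \<ge> 1" "vex q (- e) \<alpha>" "vex q e (inverse \<alpha>)"
proof -
  have "vge q 1 den" using vge_dvd[OF q gden] qd by simp
  then show "e \<ge> 1" using vex_le[OF q e] by simp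
  have "\<not> gdvd q num" using cop q qd by blast
  then have "vex q 0 num" using vex0_int[OF q gnum] by simp
  then have "vex q (0 - e) (num / den)" using vex_divide[OF q _ e] by blast
  then show "vex q (- e) \<alpha>" using al by simp
  then show "vex q e (inverse \<alpha>)" using vex_inverse[OF q] by fastforce
qed

lemma Texists:
  assumes q: "gauss_prime q" and qd: "gdvd q den"
  obtains e where "vex q e den"
  using vex_exists_int[OF q gden den0] by blast

lemma S_Y': "N = nat (k - l) \<Longrightarrow> l \<le> k \<Longrightarrow> S l = \<alpha> powi l * Yk N"
  using S_Y[OF anz, where k=k and N=N and d=d] by simp

lemma S_empty: "l > k \<Longrightarrow> S l = 0" by simp

lemma forward_vge:
  assumes lam: "\<forall>l\<le>k. (\<Sum>j\<in>{l..k}. of_int (d j) * \<alpha> powi (j - l)) \<in> Lambda \<alpha>"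
    and q: "gauss_prime q" and qd: "gdvd q den" and e: "vex q e den"
  shows "vge q (e - e * l) (S l)"
proof (cases "l \<le> k")
  case False
  then show ?thesis using vge_0[OF q] by simp
next
  case True
  define N where "N = nat (k - l)"
  have lN: "l = k - int N" using True unfolding N_def by simp
  have "Yk N \<in> Lambda \<alpha>" using lam True Y_sum[OF anz, where k=k and N=N and d=d] lN by metis
  then obtain z where z: "z \<in> Zring (inverse \<alpha>)" "Yk N = inverse \<alpha> * z" unfolding Lambda_def by auto
  obtain c n where c: "z = (\<Sum>i<n. of_int (c i) * (inverse \<alpha>) ^ i)" using z(1) unfolding Zring_def by auto
  have e1: "e \<ge> 1" and va: "vex q (- e) \<alpha>" and vb: "vex q e (inverse \<alpha>)" using Tprime[OF q qd e] by auto
  have vb0: "vge q 0 (inverse \<alpha>)" using vge_mono[OF q _ vex_vge[OF q vb]] e1 by simp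
  have vbp: "vge q 0 ((inverse \<alpha>) ^ i)" for i
  proof (induction i)
    case 0 then show ?case using vge_int[OF q] by simp
  next
    case (Suc i) then show ?case using vge_mult[OF q vb0 Suc] by simp
  qed
  have "vge q 0 z" unfolding c
    by (intro vge_sum[OF q]) (use vge_mult[OF q vge_of_int[OF q] vbp] in simp)
  then have "vge q (e + 0) (inverse \<alpha> * z)" by (rule vge_mult[OF q vex_vge[OF q vb]])
  then have "vge q (e + 0) (Yk N)" using z(2) by simp
  moreover have "vex q (- e * l) (\<alpha> powi l)" using vex_powi[OF q va] by simp
  ultimately have "vge q (- e * l + e) (\<alpha> powi l * Yk N)" using vge_mult[OF q vex_vge[OF q] ] by fastforce
  then show ?thesis using S_Y'[OF N_def True] by (simp add: algebra_simps)
qed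

lemma forward:
  assumes lam: "\<forall>l\<le>k. (\<Sum>j\<in>{l..k}. of_int (d j) * \<alpha> powi (j - l)) \<in> Lambda \<alpha>"
    and q: "gauss_prime q" and qd: "gdvd q den"
  shows "((\<lambda>l. padic_abs q (S l)) \<longlongrightarrow> 0) at_bot"
proof -
  obtain e where e: "vex q e den" using Texists[OF q qd] by blast
  have e1: "e \<ge> 1" using Tprime[OF q qd e] by auto
  have g: "gn q > 1" using gauss_prime_gn[OF q] by simp
  show ?thesis
  proof (rule tendsto_bound[OF g e1])
    fix l
    have "padic_abs q (S l) \<le> gn q powr (- real_of_int (e - e * l))"
      using padic_le[OF q gauss_rat_S forward_vge[OF lam q qd e]] by simp
    moreover have "0 \<le> padic_abs q (S l)" unfolding padic_abs_def by simp
    ultimately show "0 \<le> padic_abs q (S l) \<and> padic_abs q (S l) \<le> gn q powr (- real_of_int (e - e * l))" by simp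
  qed
qed


lemma lim_vge:
  assumes q: "gauss_prime q" and lim: "((\<lambda>l. padic_abs q (S l)) \<longlongrightarrow> 0) at_bot"
  shows "\<exists>L. \<forall>l\<le>L. vge q M (S l)"
proof -
  have "gn q \<noteq> 0" using gauss_prime_gn[OF q] by linarith
  then have "gn q powr (- real_of_int M) > 0" by simp
  then have "eventually (\<lambda>l. padic_abs q (S l) < gn q powr (- real_of_int M)) at_bot"
    using order_tendstoD(2)[OF lim] by blast
  then obtain L where "\<forall>l\<le>L. padic_abs q (S l) < gn q powr (- real_of_int M)"
    unfolding eventually_at_bot_linorder by blast
  then show ?thesis using padic_small[OF q gauss_rat_S] by blast
qed

lemma Bstep:
  assumes q: "gauss_prime q" and vb: "vex q e (inverse \<alpha>)" and e1: "e \<ge> 1"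
    and h: "vge q e (inverse \<alpha> ^ Suc M * Yk (N + Suc M))"
  shows "vge q e (inverse \<alpha> ^ M * Yk (N + M))"
proof -
  define \<delta> where "\<delta> = (of_int (d (k - int (N + M) - 1)) :: complex)"
  have "inverse \<alpha> ^ Suc M * Yk (N + Suc M) = inverse \<alpha> ^ M * (inverse \<alpha> * \<alpha>) * Yk (N + M) + \<delta> * inverse \<alpha> ^ Suc M"
    unfolding \<delta>_def by (simp add: algebra_simps)
  also have "\<dots> = inverse \<alpha> ^ M * Yk (N + M) + \<delta> * inverse \<alpha> ^ Suc M" using anz by simp
  finally have eqn: "inverse \<alpha> ^ M * Yk (N + M) = inverse \<alpha> ^ Suc M * Yk (N + Suc M) - \<delta> * inverse \<alpha> ^ Suc M"
    by simp
  have "vex q (e * int (Suc M)) (inverse \<alpha> ^ Suc M)" by (rule vex_power[OF q vb])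
  then have "vge q (0 + e * int (Suc M)) (\<delta> * inverse \<alpha> ^ Suc M)"
    unfolding \<delta>_def by (intro vge_mult[OF q vge_of_int[OF q] vex_vge[OF q]])
  moreover have "e \<le> 0 + e * int (Suc M)" using e1 by simp
  ultimately have "vge q e (\<delta> * inverse \<alpha> ^ Suc M)" using vge_mono[OF q] by blast
  then show ?thesis unfolding eqn using vge_diff[OF q h] by blast
qed

lemma Bind:
  assumes q: "gauss_prime q" and vb: "vex q e (inverse \<alpha>)" and e1: "e \<ge> 1"
  shows "vge q e (inverse \<alpha> ^ M * Yk (N + M)) \<Longrightarrow> vge q e (Yk N)"
proof (induction M)
  case 0 then show ?case by simp
next
  case (Suc M) then show ?case using Bstep[OF q vb e1] by blast
qed

lemma Blemma:
  assumes q: "gauss_prime q" and qd: "gdvd q den" and e: "vex q e den"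
    and lim: "((\<lambda>l. padic_abs q (S l)) \<longlongrightarrow> 0) at_bot"
  shows "vge q e (Yk N)"
proof -
  have e1: "e \<ge> 1" and va: "vex q (- e) \<alpha>" and vb: "vex q e (inverse \<alpha>)" using Tprime[OF q qd e] by auto
  obtain L where L: "\<forall>l\<le>L. vge q (e + e * (int N - k)) (S l)" using lim_vge[OF q lim] by blast
  define M where "M = nat (k - int N - L)"
  define l' where "l' = k - int (N + M)"
  have l'L: "l' \<le> L" unfolding l'_def M_def by simp
  have l'k: "l' \<le> k" unfolding l'_def by simp
  have Sl: "S l' = \<alpha> powi l' * Yk (N + M)" by (rule S_Y') (use l'k in \<open>auto simp: l'_def\<close>)
  have pw: "\<alpha> powi (int N - k) * \<alpha> powi l' = inverse \<alpha> ^ M"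
  proof -
    have "\<alpha> powi (int N - k) * \<alpha> powi l' = \<alpha> powi (int N - k + l')"
      by (rule power_int_add[symmetric]) (use anz in simp)
    also have "int N - k + l' = - int M" unfolding l'_def by simp
    finally show ?thesis by (simp add: power_int_minus power_inverse)
  qed
  have "inverse \<alpha> ^ M * Yk (N + M) = \<alpha> powi (int N - k) * S l'" unfolding Sl pw[symmetric] by (simp add: algebra_simps)
  moreover have "vge q (- e * (int N - k) + (e + e * (int N - k))) (\<alpha> powi (int N - k) * S l')"
    using vge_mult[OF q vex_vge[OF q vex_powi[OF q va]] L[rule_format, OF l'L]] .
  ultimately have "vge q e (inverse \<alpha> ^ M * Yk (N + M))" by (simp add: algebra_simps)
  then show ?thesis using Bind[OF q vb e1] by blast
qed

lemma conj_eq: "of_int a2 * (cnj \<alpha>)\<^sup>2 + of_int a1 * cnj \<alpha> + of_int a0 = 0"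
  using arg_cong[OF eq, of cnj] by simp

lemma alpha_ne_cnj: "\<alpha> - cnj \<alpha> \<noteq> 0"
  using im by (simp add: complex_diff_cnj)

lemma vieta: "of_int a2 * (\<alpha> + cnj \<alpha>) + of_int a1 = 0"
proof -
  have "(\<alpha> - cnj \<alpha>) * (of_int a2 * (\<alpha> + cnj \<alpha>) + of_int a1) =
    (of_int a2 * \<alpha>\<^sup>2 + of_int a1 * \<alpha> + of_int a0) - (of_int a2 * (cnj \<alpha>)\<^sup>2 + of_int a1 * cnj \<alpha> + of_int a0)"
    by (simp add: algebra_simps power2_eq_square)
  also have "\<dots> = 0" using eq conj_eq by simp
  finally show ?thesis using alpha_ne_cnj by simp
qed


lemma caseA:
  assumes q: "gauss_prime q" and na: "\<not> vge q 0 \<alpha>" and nd1: "\<not> gdvd q (of_int a1)"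
    and n0: "\<not> vge q 0 (Wk n0)" and mn: "\<forall>n<n0. vge q 0 (Wk n)"
    and B: "\<And>N e. vex q e den \<Longrightarrow> vge q e (Yk N)"
  shows False
proof -
  have qd: "gdvd q den" using valpha_ndvd[OF q] na by blast
  obtain e where e: "vex q e den" using Texists[OF q qd] by blast
  have e1: "e \<ge> 1" and va: "vex q (- e) \<alpha>" and vb: "vex q e (inverse \<alpha>)" using Tprime[OF q qd e] by auto
  have va1: "vex q 0 (of_int a1)" using vex0_int[OF q _ nd1] by simp
  have h0: "of_int a2 + of_int a1 * inverse \<alpha> + of_int a0 * inverse \<alpha> ^ 2 = 0"
  proof -
    have ai: "\<alpha> * inverse \<alpha> = 1" using anz by simp
    have "(of_int a2 * \<alpha>\<^sup>2 + of_int a1 * \<alpha> + of_int a0) * (inverse \<alpha>)\<^sup>2 = 0" using eq by simp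
    moreover have "(of_int a2 * \<alpha>\<^sup>2 + of_int a1 * \<alpha> + of_int a0) * (inverse \<alpha>)\<^sup>2
      = of_int a2 * (\<alpha> * inverse \<alpha>)\<^sup>2 + of_int a1 * inverse \<alpha> * (\<alpha> * inverse \<alpha>) + of_int a0 * inverse \<alpha> ^ 2"
      by (simp add: algebra_simps power2_eq_square)
    ultimately show ?thesis unfolding ai by simp
  qed
  have a2eq: "of_int a2 = - (of_int a1 * inverse \<alpha>) + - (of_int a0 * inverse \<alpha> ^ 2)"
  proof -
    have "(of_int a2 :: complex) = (of_int a2 + of_int a1 * inverse \<alpha> + of_int a0 * inverse \<alpha> ^ 2) - of_int a1 * inverse \<alpha> - of_int a0 * inverse \<alpha> ^ 2"
      by simp
    then show ?thesis unfolding h0 by simp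
  qed
  have t1: "vex q e (- (of_int a1 * inverse \<alpha>))"
    using vex_minus[OF q vex_mult[OF q va1 vb]] by simp
  have "vge q (0 + e * int 2) (of_int a0 * inverse \<alpha> ^ 2)"
    by (rule vge_mult[OF q vge_of_int[OF q] vex_vge[OF q vex_power[OF q vb]]])
  then have "vge q (e + 1) (of_int a0 * inverse \<alpha> ^ 2)" using vge_mono[OF q, of "e + 1" "0 + e * int 2"] e1 by simp
  then have t2: "vge q (e + 1) (- (of_int a0 * inverse \<alpha> ^ 2))" using vge_minus[OF q] by blast
  have va2: "vex q e (of_int a2)" unfolding a2eq using vex_add_strict[OF q t1 t2] .
  have "n0 \<noteq> 0" using n0 vge_0[OF q] by (metis Wf.simps(1) of_rat_0)
  then obtain m where nm: "n0 = Suc m" by (cases n0) auto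
  have vm: "vge q 0 (Wk m)" using mn nm by simp
  have "Wk n0 \<noteq> 0" using n0 vge_0[OF q] by metis
  then obtain m0 where m0: "vex q m0 (Wk n0)" using vex_exists[OF q] by blast
  have m0n: "m0 < 0"
  proof (rule ccontr)
    assume "\<not> m0 < 0"
    then have "vge q 0 (Wk n0)" using vge_mono[OF q _ vex_vge[OF q m0]] by simp
    then show False using n0 by simp
  qed
  define X where "X = of_int (d (k - int m - 1)) - of_int a1 * Wk (Suc m) - of_int a0 * Wk m"
  have X: "of_int a2 * Wk (Suc n0) = X" unfolding X_def nm by (rule Wrec)
  have Xe: "X = - (of_int a1 * Wk n0) + (of_int (d (k - int m - 1)) - of_int a0 * Wk m)"
    unfolding X_def nm by simp
  have "vex q m0 (- (of_int a1 * Wk n0))" using vex_minus[OF q vex_mult[OF q va1 m0]] by simp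
  moreover have "vge q (m0 + 1) (of_int (d (k - int m - 1)) - of_int a0 * Wk m)"
  proof -
    have "vge q 0 (of_int a0 * Wk m)" using vge_mult[OF q vge_of_int[OF q] vm] by simp
    then have "vge q 0 (of_int (d (k - int m - 1)) - of_int a0 * Wk m)"
      using vge_diff[OF q vge_of_int[OF q]] by blast
    then show ?thesis using vge_mono[OF q, of "m0 + 1" 0] m0n by simp
  qed
  ultimately have vX: "vex q m0 X" unfolding Xe by (rule vex_add_strict[OF q])
  have "Wk (Suc n0) = X / of_int a2" using X a2nz by (simp add: field_simps)
  then have w1: "vex q (m0 - e) (Wk (Suc n0))" using vex_divide[OF q vX va2] by simp
  define \<delta> where "\<delta> = (of_int (d (k - int n0 - 1)) :: complex)"
  have "Yk (Suc n0) = of_int a2 * Wk (Suc (Suc n0)) + (of_int a1 + of_int a2 * \<alpha>) * Wk (Suc n0)" by (rule YW)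
  also have "\<dots> = (\<delta> - of_int a1 * Wk (Suc n0) - of_int a0 * Wk n0) + (of_int a1 + of_int a2 * \<alpha>) * Wk (Suc n0)"
    unfolding Wrec \<delta>_def by simp
  also have "\<dots> = (of_int a2 * \<alpha>) * Wk (Suc n0) + (\<delta> - of_int a0 * Wk n0)" by (simp add: algebra_simps)
  finally have Yeq: "Yk (Suc n0) = (of_int a2 * \<alpha>) * Wk (Suc n0) + (\<delta> - of_int a0 * Wk n0)" .
  have "vex q (e + - e) (of_int a2 * \<alpha>)" by (rule vex_mult[OF q va2 va])
  then have va2a: "vex q 0 (of_int a2 * \<alpha>)" by simp
  have "vex q (0 + (m0 - e)) ((of_int a2 * \<alpha>) * Wk (Suc n0))" by (rule vex_mult[OF q va2a w1])
  then have f1: "vex q (m0 - e) ((of_int a2 * \<alpha>) * Wk (Suc n0))" by simp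
  have "vge q (0 + m0) (of_int a0 * Wk n0)" by (rule vge_mult[OF q vge_of_int[OF q] vex_vge[OF q m0]])
  then have g1: "vge q (m0 - e + 1) (of_int a0 * Wk n0)" using vge_mono[OF q, of "m0 - e + 1" "0 + m0"] e1 by simp
  have g2: "vge q (m0 - e + 1) \<delta>" unfolding \<delta>_def using vge_mono[OF q, of "m0 - e + 1" 0] vge_of_int[OF q] e1 m0n by simp
  have "vex q (m0 - e) (Yk (Suc n0))" unfolding Yeq using vex_add_strict[OF q f1 vge_diff[OF q g2 g1]] .
  moreover have "vge q e (Yk (Suc n0))" by (rule B[OF e])
  ultimately have "e \<le> m0 - e" using vex_le[OF q] by blast
  then show False using e1 m0n by simp
qed


lemma not_all_dvd:
  assumes p: "gauss_prime p" and d0: "gdvd p (of_int a0)" and d1: "gdvd p (of_int a1)" and d2: "gdvd p (of_int a2)"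
  shows False
proof -
  obtain u v where uv: "u * a0 + v * a1 = gcd a0 a1" using bezout_int by blast
  obtain u' v' where uv': "u' * gcd a0 a1 + v' * a2 = gcd (gcd a0 a1) a2" using bezout_int by blast
  have h: "u' * (u * a0 + v * a1) + v' * a2 = 1" using uv uv' gcd1 by simp
  have "(1::complex) = of_int u' * (of_int u * of_int a0 + of_int v * of_int a1) + of_int v' * of_int a2"
    by (metis h of_int_1 of_int_add of_int_mult)
  moreover have "gdvd p (of_int u' * (of_int u * of_int a0 + of_int v * of_int a1) + of_int v' * of_int a2)"
    by (intro gdvd_add gdvd_mult_left d0 d1 d2) auto
  ultimately show False using p unfolding gauss_prime_def by simp
qed

lemma caseB:
  assumes p: "gauss_prime p" and d1: "gdvd p (of_int a1)" and d2: "gdvd p (of_int a2)"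
    and n0: "\<not> vge p 0 (Wk n0)"
    and B: "\<And>q N e. gauss_prime q \<Longrightarrow> gdvd q den \<Longrightarrow> vex q e den \<Longrightarrow> vge q e (Yk N)"
  shows False
proof -
  have nd0: "\<not> gdvd p (of_int a0)" using not_all_dvd[OF p _ d1 d2] by blast
  have va0: "vex p 0 (of_int a0)" using vex0_int[OF p _ nd0] by simp
  have pa1: "vge p 1 (of_int a1)" and pa2: "vge p 1 (of_int a2)" using vge_dvd[OF p] d1 d2 by auto
  have key: "\<not> vge p 0 x" if x: "of_int a2 * x\<^sup>2 + of_int a1 * x + of_int a0 = 0" for x
  proof
    assume vx: "vge p 0 x"
    have "vge p (0 + 0) (x * x)" by (rule vge_mult[OF p vx vx])
    then have xx: "vge p 0 (x * x)" by simp
    have "vge p (1 + 0) (of_int a2 * (x * x))" by (rule vge_mult[OF p pa2 xx])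
    then have h1: "vge p 1 (of_int a2 * (x * x))" by simp
    have "vge p (1 + 0) (of_int a1 * x)" by (rule vge_mult[OF p pa1 vx])
    then have h2: "vge p 1 (of_int a1 * x)" by simp
    have "vge p 1 (- (of_int a2 * (x * x) + of_int a1 * x))" by (rule vge_minus[OF p vge_add[OF p h1 h2]])
    moreover have "- (of_int a2 * (x * x) + of_int a1 * x) = of_int a0"
    proof -
      have "(of_int a0::complex) = (of_int a2 * x\<^sup>2 + of_int a1 * x + of_int a0) - (of_int a2 * (x * x) + of_int a1 * x)"
        by (simp add: power2_eq_square)
      then show ?thesis unfolding x by simp
    qed
    ultimately have "vge p 1 (of_int a0)" by simp
    then show False using vge_dvd[OF p] nd0 by simp
  qed
  have na: "\<not> vge p 0 \<alpha>" using key eq by blast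
  have "\<not> vge p 0 (cnj \<alpha>)" using key conj_eq by blast
  then have nca: "\<not> vge (cnj p) 0 \<alpha>" using vge_cnj[of p 0 "cnj \<alpha>"] by simp
  have cp: "gauss_prime (cnj p)" using gauss_prime_cnj[OF p] .
  have pd: "gdvd p den" using valpha_ndvd[OF p] na by blast
  have cpd: "gdvd (cnj p) den" using valpha_ndvd[OF cp] nca by blast
  obtain e1 where e1: "vex p e1 den" using Texists[OF p pd] by blast
  obtain e2 where e2: "vex (cnj p) e2 den" using Texists[OF cp cpd] by blast
  have e11: "e1 \<ge> 1" using Tprime[OF p pd e1] by simp
  have e21: "e2 \<ge> 1" using Tprime[OF cp cpd e2] by simp
  have YN: "vge p 0 (Yk N)" for N using vge_mono[OF p, of 0 e1] B[OF p pd e1] e11 by simp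
  have YcN: "vge p 0 (cnj (Yk N))" for N
  proof -
    have "vge (cnj p) 0 (Yk N)" using vge_mono[OF cp, of 0 e2] B[OF cp cpd e2] e21 by simp
    then show ?thesis using vge_cnj[of p 0 "cnj (Yk N)"] by simp
  qed
  define z where "z = of_int a2 * (\<alpha> - cnj \<alpha>)"
  have z0: "z \<noteq> 0" unfolding z_def using a2nz alpha_ne_cnj by simp
  have zr: "gauss_rat z" unfolding z_def using ar by (intro gauss_rat_mult gauss_rat_diff gauss_rat_cnj) auto
  obtain c where c: "vex p c z" using vex_exists[OF p zr z0] by blast
  have WN: "vge p (- c) (Wk N)" for N
  proof -
    have "Yk N - cnj (Yk N) = z * Wk N" unfolding YW Ycnj z_def by (simp add: algebra_simps)
    then have "Wk N = (Yk N - cnj (Yk N)) / z" using z0 by (simp add: field_simps)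
    moreover have "vge p (0 - c) ((Yk N - cnj (Yk N)) / z)" by (rule vge_divide[OF p vge_diff[OF p YN YcN] c])
    ultimately show ?thesis by simp
  qed
  have rec2: "Wk n = (of_int (d (k - int n - 1)) - of_int a1 * Wk (Suc n) - of_int a2 * Wk (Suc (Suc n))) / of_int a0" for n
  proof -
    have "of_int a0 * Wk n = of_int (d (k - int n - 1)) - of_int a1 * Wk (Suc n) - of_int a2 * Wk (Suc (Suc n))"
      using Wrec[where n=n] by (simp add: algebra_simps)
    moreover have "(of_int a0 :: complex) \<noteq> 0" using vex_nz[OF p va0] .
    ultimately show ?thesis by (simp add: field_simps)
  qed
  have boot: "\<forall>n. vge p (min 0 (int j - c)) (Wk n)" for j :: nat
  proof (induction j)
    case 0
    show ?case using WN vge_mono[OF p] by (metis min.cobounded2 of_nat_0 diff_0)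
  next
    case (Suc j)
    define t where "t = min 0 (int (Suc j) - c)"
    have t0: "t \<le> 0" unfolding t_def by simp
    have t1: "t \<le> 1 + min 0 (int j - c)" unfolding t_def by simp
    show ?case
    proof
      fix n
      have "vge p (1 + min 0 (int j - c)) (of_int a1 * Wk (Suc n))" by (rule vge_mult[OF p pa1 Suc[rule_format]])
      then have g1: "vge p t (of_int a1 * Wk (Suc n))" using vge_mono[OF p t1] by blast
      have "vge p (1 + min 0 (int j - c)) (of_int a2 * Wk (Suc (Suc n)))" by (rule vge_mult[OF p pa2 Suc[rule_format]])
      then have g2: "vge p t (of_int a2 * Wk (Suc (Suc n)))" using vge_mono[OF p t1] by blast
      have g0: "vge p t (of_int (d (k - int n - 1)))" using vge_mono[OF p t0 vge_of_int[OF p]] .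
      have "vge p (t - 0) ((of_int (d (k - int n - 1)) - of_int a1 * Wk (Suc n) - of_int a2 * Wk (Suc (Suc n))) / of_int a0)"
        by (rule vge_divide[OF p vge_diff[OF p vge_diff[OF p g0 g1] g2] va0])
      then show "vge p (min 0 (int (Suc j) - c)) (Wk n)" unfolding t_def rec2[of n, symmetric] by simp
    qed
  qed
  have "vge p (min 0 (int (nat c) - c)) (Wk n0)" using boot by blast
  moreover have "min 0 (int (nat c) - c) = 0" by simp
  ultimately show False using n0 by simp
qed


lemma W_ints:
  assumes B: "\<And>q N e. gauss_prime q \<Longrightarrow> gdvd q den \<Longrightarrow> vex q e den \<Longrightarrow> vge q e (Yk N)"
  shows "Wf a0 a1 a2 d k n \<in> \<int>"
proof (rule ccontr)
  assume "Wf a0 a1 a2 d k n \<notin> \<int>"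
  then obtain p where p: "gauss_prime p" and pn: "\<not> vge p 0 (Wk n)" using nonint_prime by blast
  define n0 where "n0 = (LEAST n. \<not> vge p 0 (Wk n))"
  have n0: "\<not> vge p 0 (Wk n0)" unfolding n0_def using pn by (rule LeastI)
  have mn: "\<forall>m<n0. vge p 0 (Wk m)" unfolding n0_def using not_less_Least by blast
  have d2: "gdvd p (of_int a2)"
  proof (rule ccontr)
    assume nd2: "\<not> gdvd p (of_int a2)"
    have va2: "vex p 0 (of_int a2)" using vex0_int[OF p _ nd2] by simp
    have "vge p 0 (Wk m) \<and> vge p 0 (Wk (Suc m))" for m
    proof (induction m)
      case 0
      have "Wk (Suc 0) = of_int (d k) / of_int a2" using W1 a2nz by (simp add: field_simps)
      moreover have "vge p (0 - 0) (of_int (d k) / of_int a2)" by (rule vge_divide[OF p vge_of_int[OF p] va2])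
      ultimately show ?case using vge_0[OF p] by simp
    next
      case (Suc m)
      have "Wk (Suc (Suc m)) = (of_int (d (k - int m - 1)) - of_int a1 * Wk (Suc m) - of_int a0 * Wk m) / of_int a2"
        using Wrec[where n=m] a2nz by (simp add: field_simps)
      moreover have "vge p 0 (of_int a1 * Wk (Suc m))" using vge_mult[OF p vge_of_int[OF p] conjunct2[OF Suc]] by simp
      moreover have "vge p 0 (of_int a0 * Wk m)" using vge_mult[OF p vge_of_int[OF p] conjunct1[OF Suc]] by simp
      ultimately have "vge p (0 - 0) (Wk (Suc (Suc m)))"
        using vge_divide[OF p vge_diff[OF p vge_diff[OF p vge_of_int[OF p]]] va2] by simp
      then show ?case using Suc by simp
    qed
    then show False using n0 by blast
  qed
  show False
  proof (cases "gdvd p (of_int a1)")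
    case True
    then show False using caseB[OF p True d2 n0 B] by blast
  next
    case False
    have "\<not> (vge p 0 \<alpha> \<and> vge p 0 (cnj \<alpha>))"
    proof
      assume h: "vge p 0 \<alpha> \<and> vge p 0 (cnj \<alpha>)"
      have pa2: "vge p 1 (of_int a2)" using vge_dvd[OF p] d2 by simp
      have "vge p (1 + 0) (of_int a2 * (\<alpha> + cnj \<alpha>))" using vge_mult[OF p pa2 vge_add[OF p]] h by blast
      then have "vge p 1 (- (of_int a2 * (\<alpha> + cnj \<alpha>)))" using vge_minus[OF p] by simp
      moreover have "- (of_int a2 * (\<alpha> + cnj \<alpha>)) = of_int a1"
      proof -
        have "(of_int a1::complex) = (of_int a2 * (\<alpha> + cnj \<alpha>) + of_int a1) - of_int a2 * (\<alpha> + cnj \<alpha>)" by simp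
        then show ?thesis unfolding vieta by simp
      qed
      ultimately have "vge p 1 (of_int a1)" by simp
      then show False using vge_dvd[OF p] False by simp
    qed
    then consider "\<not> vge p 0 \<alpha>" | "\<not> vge p 0 (cnj \<alpha>)" by blast
    then show False
    proof cases
      case 1
      show False by (rule caseA[OF p 1 False n0 mn B[OF p]]) (use valpha_ndvd[OF p] 1 in blast)
    next
      case 2
      have cp: "gauss_prime (cnj p)" using gauss_prime_cnj[OF p] .
      have na: "\<not> vge (cnj p) 0 \<alpha>" using 2 vge_cnj[of p 0 "cnj \<alpha>"] by simp
      have nd1: "\<not> gdvd (cnj p) (of_int a1)" using False gdvd_cnj_iff[of p "of_int a1"] by simp
      have cW: "vge (cnj p) 0 (Wk m) \<longleftrightarrow> vge p 0 (Wk m)" for m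
        using vge_cnj[of p 0 "Wk m"] by simp
      have cpd: "gdvd (cnj p) den" using valpha_ndvd[OF cp] na by blast
      show False by (rule caseA[OF cp na nd1 _ _ B[OF cp cpd]]) (use n0 mn cW in auto)
    qed
  qed
qed

lemma main_iff:
  assumes dig: "\<forall>j\<le>k. d j \<in> {0..\<bar>a0\<bar> - 1}" and dk: "d k \<noteq> 0"
    and sm: "(\<lambda>n::nat. of_int (d (k - int n)) * \<alpha> powi (k - int n)) sums x"
  shows "alpha_expansion \<alpha> {0..\<bar>a0\<bar> - 1} d k x \<longleftrightarrow>
     (\<forall>p. gauss_prime p \<and> gdvd p den \<longrightarrow>
        ((\<lambda>l. padic_abs p (\<Sum>j\<in>{l..k}. of_int (d j) * \<alpha> powi j)) \<longlongrightarrow> 0) at_bot)"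
proof
  assume "alpha_expansion \<alpha> {0..\<bar>a0\<bar> - 1} d k x"
  then have lam: "\<forall>l\<le>k. (\<Sum>j\<in>{l..k}. of_int (d j) * \<alpha> powi (j - l)) \<in> Lambda \<alpha>"
    unfolding alpha_expansion_def by blast
  show "\<forall>p. gauss_prime p \<and> gdvd p den \<longrightarrow> ((\<lambda>l. padic_abs p (\<Sum>j\<in>{l..k}. of_int (d j) * \<alpha> powi j)) \<longlongrightarrow> 0) at_bot"
    using forward[OF lam] by blast
next
  assume R: "\<forall>p. gauss_prime p \<and> gdvd p den \<longrightarrow> ((\<lambda>l. padic_abs p (\<Sum>j\<in>{l..k}. of_int (d j) * \<alpha> powi j)) \<longlongrightarrow> 0) at_bot"
  have B: "vge q e (Yk N)" if "gauss_prime q" "gdvd q den" "vex q e den" for q N e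
    using Blemma[OF that] R that by blast
  have ints: "\<And>n. Wf a0 a1 a2 d k n \<in> \<int>" using W_ints[OF B] by blast
  have lam: "(\<Sum>j\<in>{l..k}. of_int (d j) * \<alpha> powi (j - l)) \<in> Lambda \<alpha>" if l: "l \<le> k" for l
  proof -
    define N where "N = nat (k - l)"
    have lN: "l = k - int N" using l unfolding N_def by simp
    have "(\<Sum>j\<in>{l..k}. of_int (d j) * \<alpha> powi (j - l)) = Yk N"
      unfolding lN by (rule Y_sum[OF anz])
    moreover have "Yk N \<in> Zring \<alpha>" by (rule Y_Zring)
    moreover have "Yk N \<in> (\<lambda>z. inverse \<alpha> * z) ` Zring (inverse \<alpha>)"
      by (rule Y_Lambda2[OF a2nz anz eq ints])
    ultimately show ?thesis unfolding Lambda_def by simp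
  qed
  show "alpha_expansion \<alpha> {0..\<bar>a0\<bar> - 1} d k x"
    unfolding alpha_expansion_def using dig dk sm lam by blast
qed

end

theorem mainTheorem11:
  fixes \<alpha> x num den :: complex and a0 a1 a2 k :: int and d :: "int \<Rightarrow> int"
  assumes "gauss_rat \<alpha>" and "Im \<alpha> \<noteq> 0" and "cmod \<alpha> > 1"
    and "gcd (gcd a0 a1) a2 = 1" and "a2 > 0"
    and "of_int a2 * \<alpha>\<^sup>2 + of_int a1 * \<alpha> + of_int a0 = 0"
    and "gauss_int num" and "gauss_int den" and "\<alpha> = num / den"
    and "\<forall>p. gauss_prime p \<longrightarrow> \<not> (gdvd p num \<and> gdvd p den)"
    and "\<forall>j\<le>k. d j \<in> {0..\<bar>a0\<bar> - 1}" and "d k \<noteq> 0"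
    and "(\<lambda>n::nat. of_int (d (k - int n)) * \<alpha> powi (k - int n)) sums x"
  shows "alpha_expansion \<alpha> {0..\<bar>a0\<bar> - 1} d k x \<longleftrightarrow>
     (\<forall>p. gauss_prime p \<and> gdvd p den \<longrightarrow>
        ((\<lambda>l. padic_abs p (\<Sum>j\<in>{l..k}. of_int (d j) * \<alpha> powi j)) \<longlongrightarrow> 0) at_bot)"
  by (rule main_iff[OF assms])

end
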